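(* Let $\lambda>0$ and $K(\lambda, z) = \left(\frac{\cos \pi z}{\pi}\right)\sum_{n \in \mathbb{Z}} \frac{ (-1)^{n}\, e^{-\lambda|n- \frac{1}{2}|}}{z - n + \frac{1}{2}}$. If $0<\beta<\frac12$, then for every $z$ with $\Re(z)>\beta$, $$e^{-\lambda z}-K(\lambda,z)=\frac{1}{2\pi i}\int_{\beta-i\infty}^{\beta+i\infty}\left(\frac{\cos\pi z}{\cos\pi w}\right)\left(\frac{2w}{z^2-w^2}\right)e^{-\lambda w}\,\mathrm{d}w.$$ *)

theory Defs
  imports "HOL-Analysis.Analysis"
begin

definition K_raw :: "real \<Rightarrow> complex \<Rightarrow> complex" where
  "K_raw lam z = (cos (of_real pi * z) / of_real pi) *
     (\<Sum>\<^sub>\<infinity>n::int. ((-1::complex) ^ nat \<bar>n\<bar>) *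
        of_real (exp (- lam * \<bar>real_of_int n - 1/2\<bar>)) / (z - of_int n + 1/2))"

text \<open>K(lambda, -) is entire: at the zeros of cos (pi z) (the half-integers, where the
  series has poles) its value is the removable-singularity value, i.e. the limit.\<close>
definition K :: "real \<Rightarrow> complex \<Rightarrow> complex" where
  "K lam z = (if cos (of_real pi * z) = 0 then Lim (at z) (K_raw lam) else K_raw lam z)"

end

theory Submission
  imports Defs "HOL-Complex_Analysis.Complex_Analysis" "HOL-Real_Asymp.Real_Asymp"
begin


lemma cos_lower_Re:
  fixes w :: complex
  shows "norm (cos w) \<ge> \<bar>cos (Re w)\<bar> * ((exp (Im w) + exp (- Im w)) / 2)"
proof -
  have "\<bar>Re (cos w)\<bar> \<le> norm (cos w)" by (rule abs_Re_le_cmod)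
  moreover have "\<bar>Re (cos w)\<bar> = \<bar>cos (Re w)\<bar> * ((exp (Im w) + exp (- Im w)) / 2)"
    by (simp add: Re_cos abs_mult add_pos_pos)
  ultimately show ?thesis by simp
qed

lemma cos_lower_Im:
  fixes w :: complex
  shows "norm (cos w) \<ge> \<bar>exp (Im w) - exp (- Im w)\<bar> / 2"
proof -
  have "norm (cos w) ^ 2 \<ge> (\<bar>exp (Im w) - exp (- Im w)\<bar> / 2) ^ 2"
    by (simp add: norm_cos_squared power_divide exp_minus)
  then show ?thesis
    by (meson norm_ge_zero power2_le_imp_le)
qed

lemma cos_pi_zero:
  fixes w :: complex
  assumes "cos (of_real pi * w) = 0"
  shows "\<exists>n::int. w = of_int n + 1/2"
proof -
  obtain n :: int where "of_real pi * w = complex_of_real (n * pi) + of_real pi / 2"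
    using assms cos_eq_0 by blast
  then have "of_real pi * w = of_real pi * (of_int n + 1/2)"
    by (simp add: algebra_simps)
  then have "w = of_int n + 1/2" by simp
  then show ?thesis by blast
qed

lemma bound_2w:
  fixes z w :: complex
  assumes "z^2 \<noteq> w^2"
  shows "norm (2 * w / (z^2 - w^2)) \<le> 1 / norm (z - w) + 1 / norm (z + w)"
proof -
  have "z^2 - w^2 = (z-w)*(z+w)" by algebra
  then have nz: "z - w \<noteq> 0" "z + w \<noteq> 0" using assms by auto
  have "2 * w / (z^2 - w^2) = 1/(z - w) - 1/(z + w)"
    using nz by (simp add: field_simps power2_eq_square)
  also have "norm \<dots> \<le> norm (1/(z-w)) + norm (1/(z+w))" by (rule norm_triangle_ineq4)
  finally show ?thesis by (simp add: norm_divide)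
qed



definition aa :: "real \<Rightarrow> complex \<Rightarrow> int \<Rightarrow> complex" where
  "aa lam z n = ((-1::complex) ^ nat \<bar>n\<bar>) *
        of_real (exp (- lam * \<bar>real_of_int n - 1/2\<bar>)) / (z - of_int n + 1/2)"

lemma aa_pos: "aa lam z (int m + 1) = (-1)^(Suc m) * of_real (exp (- lam * (real m + 1/2))) / (z - of_real (real m + 1/2))"
proof -
  have "nat \<bar>int m + 1\<bar> = Suc m" by simp
  moreover have "\<bar>real_of_int (int m + 1) - 1/2\<bar> = real m + 1/2" by simp
  moreover have "z - of_int (int m + 1) + 1/2 = z - of_real (real m + 1/2)" by simp
  ultimately show ?thesis by (simp add: aa_def algebra_simps)
qed

lemma aa_neg: "aa lam z (- int m) = (-1)^m * of_real (exp (- lam * (real m + 1/2))) / (z + of_real (real m + 1/2))"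
proof -
  have "nat \<bar>- int m\<bar> = m" by simp
  moreover have "\<bar>real_of_int (- int m) - 1/2\<bar> = real m + 1/2" by simp
  moreover have "z - of_int (- int m) + 1/2 = z + of_real (real m + 1/2)" by simp
  ultimately show ?thesis by (simp add: aa_def algebra_simps)
qed

lemma norm_sub_real_ge:
  fixes z :: complex
  assumes "p \<ge> norm z + 1/2"
  shows "norm (z - of_real p) \<ge> 1/2"
proof -
  have "norm (z - of_real p) \<ge> norm (of_real p :: complex) - norm z"
    by (metis norm_minus_commute norm_triangle_ineq2)
  moreover have "norm (of_real p :: complex) = \<bar>p\<bar>" by (rule norm_of_real)
  moreover have "norm z \<ge> 0" by simp
  ultimately show ?thesis using assms by linarith
qed

lemma geom_exp_summable:
  assumes "lam > 0"
  shows "summable (\<lambda>m::nat. 2 * exp (- lam * real m))"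
proof -
  have "summable (\<lambda>m::nat. exp (- lam) ^ m)"
    using assms by (intro summable_geometric) simp
  then have "summable (\<lambda>m::nat. 2 * exp (- lam) ^ m)" by (rule summable_mult)
  moreover have "exp (- lam) ^ m = exp (- lam * real m)" for m
    by (simp add: exp_of_nat_mult[symmetric] mult.commute)
  ultimately show ?thesis by simp
qed

lemma aa_pos_summable:
  assumes "lam > 0"
  shows "summable (\<lambda>m. norm (aa lam z (int m + 1)))"
proof (rule summable_comparison_test' [OF geom_exp_summable[OF assms]])
  fix m :: nat assume m: "m \<ge> nat \<lceil>norm z\<rceil>"
  then have "real m \<ge> norm z" by linarith
  have d: "norm (z - of_real (real m + 1/2)) \<ge> 1/2"
    by (rule norm_sub_real_ge) (use \<open>real m \<ge> norm z\<close> in simp)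
  have e: "exp (- lam * (real m + 1/2)) \<le> exp (- lam * real m)" using assms
    by (simp add: algebra_simps)
  have "norm (aa lam z (int m + 1)) = exp (- lam * (real m + 1/2)) / norm (z - of_real (real m + 1/2))"
    by (simp add: aa_pos norm_divide norm_mult norm_power)
  also have "\<dots> \<le> exp (- lam * real m) / (1/2)"
    using d e by (intro frac_le) auto
  finally show "norm (norm (aa lam z (int m + 1))) \<le> 2 * exp (- lam * real m)" by simp
qed

lemma aa_neg_summable:
  assumes "lam > 0" "Re z > 0"
  shows "summable (\<lambda>m. norm (aa lam z (- int m)))"
proof (rule summable_comparison_test' [OF geom_exp_summable[OF assms(1)]])
  fix m :: nat assume m: "m \<ge> 0"
  have "norm (z + of_real (real m + 1/2)) \<ge> Re (z + of_real (real m + 1/2))"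
    by (rule complex_Re_le_cmod)
  then have d: "norm (z + of_real (real m + 1/2)) \<ge> 1/2" using assms by simp
  have e: "exp (- lam * (real m + 1/2)) \<le> exp (- lam * real m)" using assms
    by (simp add: algebra_simps)
  have "norm (aa lam z (- int m)) = exp (- lam * (real m + 1/2)) / norm (z + of_real (real m + 1/2))"
    by (simp add: aa_neg norm_divide norm_mult norm_power)
  also have "\<dots> \<le> exp (- lam * real m) / (1/2)"
    using d e by (intro frac_le) auto
  finally show "norm (norm (aa lam z (- int m))) \<le> 2 * exp (- lam * real m)" by simp
qed

lemma aa_series:
  assumes "lam > 0" "Re z > 0"
  shows "(\<lambda>N. \<Sum>m<N. aa lam z (int m + 1) + aa lam z (- int m)) \<longlonglongrightarrow> infsum (aa lam z) UNIV"
proof -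
  define f1 where "f1 = (\<lambda>m. aa lam z (int m + 1))"
  define f2 where "f2 = (\<lambda>m. aa lam z (- int m))"
  have s1: "summable (\<lambda>m. norm (f1 m))" using aa_pos_summable[OF assms(1)] by (simp add: f1_def)
  have s2: "summable (\<lambda>m. norm (f2 m))" using aa_neg_summable[OF assms] by (simp add: f2_def)
  have h1: "(f1 has_sum suminf f1) UNIV"
    using norm_summable_imp_has_sum[OF s1 summable_sums[OF summable_norm_cancel[OF s1]]] .
  have h2: "(f2 has_sum suminf f2) UNIV"
    using norm_summable_imp_has_sum[OF s2 summable_sums[OF summable_norm_cancel[OF s2]]] .
  have b1: "bij_betw (\<lambda>m::nat. int m + 1) UNIV {1..}"
    by (rule bij_betwI[where g = "\<lambda>n. nat (n - 1)"]) auto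
  have b2: "bij_betw (\<lambda>m::nat. - int m) UNIV {..0}"
    by (rule bij_betwI[where g = "\<lambda>n. nat (- n)"]) auto
  have H1: "(aa lam z has_sum suminf f1) {1..}"
    using h1 has_sum_reindex_bij_betw[OF b1, of "aa lam z"] by (simp add: f1_def)
  have H2: "(aa lam z has_sum suminf f2) {..0}"
    using h2 has_sum_reindex_bij_betw[OF b2, of "aa lam z"] by (simp add: f2_def)
  have "(aa lam z has_sum (suminf f1 + suminf f2)) ({1..} \<union> {..0})"
    by (rule has_sum_Un_disjoint[OF H1 H2]) auto
  moreover have "({1..} \<union> {..0}) = (UNIV :: int set)" by auto
  ultimately have "(aa lam z has_sum (suminf f1 + suminf f2)) UNIV" by simp
  then have "infsum (aa lam z) UNIV = suminf f1 + suminf f2"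
    by (rule infsumI)
  moreover have "(\<lambda>m. f1 m + f2 m) sums (suminf f1 + suminf f2)"
    using sums_add[OF summable_sums[OF summable_norm_cancel[OF s1]] summable_sums[OF summable_norm_cancel[OF s2]]] .
  ultimately have "(\<lambda>N. \<Sum>m<N. f1 m + f2 m) \<longlonglongrightarrow> infsum (aa lam z) UNIV"
    unfolding sums_def by simp
  then show ?thesis unfolding f1_def f2_def .
qed



definition Fn :: "real \<Rightarrow> complex \<Rightarrow> complex \<Rightarrow> complex" where
  "Fn lam z w = cos (of_real pi * z) * (2 * w) * exp (- of_real lam * w)"
definition Dn :: "complex \<Rightarrow> complex \<Rightarrow> complex" where
  "Dn z w = cos (of_real pi * w) * (z^2 - w^2)"

lemma integrand_eq:
  "(cos (of_real pi * z) / cos (of_real pi * w)) * (2 * w / (z^2 - w^2)) * exp (- of_real lam * w)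
    = Fn lam z w / Dn z w"
  by (simp add: Fn_def Dn_def divide_inverse inverse_mult_distrib ac_simps)

lemma Fn_holo [holomorphic_intros]: "Fn lam z holomorphic_on A"
  unfolding Fn_def by (intro holomorphic_intros)
lemma Dn_holo [holomorphic_intros]: "Dn z holomorphic_on A"
  unfolding Dn_def by (intro holomorphic_intros)

lemma Dn_deriv:
  "(Dn z has_field_derivative (- (of_real pi * sin (of_real pi * q)) * (z^2 - q^2) - cos (of_real pi * q) * (2 * q))) (at q)"
  unfolding Dn_def by (auto intro!: derivative_eq_intros simp: algebra_simps power2_eq_square)

lemma res_at:
  assumes "Dn z q = 0" "Fn lam z q \<noteq> 0" "(Dn z has_field_derivative D') (at q)" "D' \<noteq> 0"
  shows "residue (\<lambda>w. Fn lam z w / Dn z w) q = Fn lam z q / D'"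
  by (rule residue_simple_pole_deriv[where s = UNIV]) (use assms in \<open>auto intro: holomorphic_intros\<close>)

lemma res_z:
  assumes "cos (of_real pi * z) \<noteq> 0" "z \<noteq> 0"
  shows "residue (\<lambda>w. Fn lam z w / Dn z w) z = - exp (- of_real lam * z)"
proof -
  have "residue (\<lambda>w. Fn lam z w / Dn z w) z = Fn lam z z / (- cos (of_real pi * z) * (2 * z))"
    by (rule res_at) (use assms Dn_deriv[of z z] in \<open>auto simp: Dn_def Fn_def\<close>)
  also have "\<dots> = - exp (- of_real lam * z)" using assms by (simp add: Fn_def field_simps)
  finally show ?thesis .
qed

lemma sin_half_int: "sin (of_real pi * of_real (real m + 1/2)) = ((-1::complex) ^ m)"
proof -
  have "sin (pi * (real m + 1/2)) = (-1) ^ m"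
    by (simp add: algebra_simps sin_add cos_npi sin_npi)
  then have "sin (of_real (pi * (real m + 1/2)) :: complex) = of_real ((-1) ^ m)"
    by (simp only: sin_of_real)
  then show ?thesis by simp
qed

lemma cos_half_int: "cos (of_real pi * of_real (real m + 1/2) :: complex) = 0"
proof -
  have "cos (pi * (real m + 1/2)) = 0"
    by (simp add: algebra_simps cos_add cos_npi sin_npi)
  then have "cos (of_real (pi * (real m + 1/2)) :: complex) = of_real 0"
    by (simp only: cos_of_real)
  then show ?thesis by simp
qed

lemma res_half:
  assumes "cos (of_real pi * z) \<noteq> 0" "Re z > 0" "lam > 0"
  shows "residue (\<lambda>w. Fn lam z w / Dn z w) (of_real (real m + 1/2))
     = cos (of_real pi * z) / of_real pi * (aa lam z (int m + 1) + aa lam z (- int m))"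
proof -
  define p :: complex where "p = of_real (real m + 1/2)"
  define C where "C = cos (of_real pi * z)"
  define E :: complex where "E = of_real (exp (- lam * (real m + 1/2)))"
  have zp: "z \<noteq> p" using assms cos_half_int[of m] by (auto simp: p_def)
  have zp2: "z + p \<noteq> 0"
  proof
    assume "z + p = 0" then have "Re (z + p) = 0" by simp
    then show False using assms by (simp add: p_def)
  qed
  have zp1: "z - p \<noteq> 0" using zp by simp
  have sq: "z^2 - p^2 = (z - p) * (z + p)" by algebra
  have sqnz: "z^2 - p^2 \<noteq> 0" using zp1 zp2 sq by simp
  have "Re p > 0" by (simp add: p_def)
  then have pnz: "p \<noteq> 0" by auto
  have Eexp: "exp (- of_real lam * p) = E"
    by (simp add: p_def E_def exp_of_real[symmetric])
  have s: "sin (of_real pi * p) = (-1)^m" "cos (of_real pi * p) = 0"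
    unfolding p_def by (rule sin_half_int, rule cos_half_int)
  have D': "(Dn z has_field_derivative (- (of_real pi * (-1)^m) * (z^2 - p^2))) (at p)"
    using Dn_deriv[of z p] unfolding s by simp
  have "residue (\<lambda>w. Fn lam z w / Dn z w) p = Fn lam z p / (- (of_real pi * (-1)^m) * (z^2 - p^2))"
    by (rule res_at[OF _ _ D']) (use assms pnz sqnz s in \<open>auto simp: Dn_def Fn_def\<close>)
  also have "\<dots> = C * 2 * p * E / (- (of_real pi * (-1)^m) * (z^2 - p^2))"
    unfolding Fn_def Eexp C_def by simp
  also have "\<dots> = C / of_real pi * ((-1)^m * E * (- (2 * p) / (z^2 - p^2)))"
  proof -
    have "(-1::complex)^m = 1 \<or> (-1::complex)^m = -1" by (cases "even m") auto
    then show ?thesis using sqnz by (auto simp: field_simps)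
  qed
  also have "\<dots> = C / of_real pi * ((-1)^(Suc m) * E / (z - p) + (-1)^m * E / (z + p))"
  proof -
    have "- (2 * p) / (z^2 - p^2) = 1/(z+p) - 1/(z-p)"
      using zp1 zp2 sq by (simp add: field_simps)
    then have "C / of_real pi * ((-1)^m * E * (- (2 * p) / (z^2 - p^2)))
       = C / of_real pi * ((-1)^m * E * (1/(z+p) - 1/(z-p)))" by (simp only:)
    also have "(-1)^m * E * (1/(z+p) - 1/(z-p)) = (-1)^(Suc m) * E / (z - p) + (-1)^m * E / (z + p)"
      by (simp add: divide_inverse ring_distribs)
    finally show ?thesis .
  qed
  finally show ?thesis by (simp add: aa_pos aa_neg p_def C_def E_def)
qed



lemma rect_residue:
  fixes N :: nat and lam \<beta> :: real and z :: complex
  assumes "lam > 0" "0 < \<beta>" "\<beta> < 1/2" "Re z > \<beta>" "cos (of_real pi * z) \<noteq> 0"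
    and "real N > Re z - \<beta>" "real N > \<bar>Im z\<bar>"
  shows "contour_integral (rectpath (Complex \<beta> (- real N)) (Complex (\<beta> + real N) (real N)))
            (\<lambda>w. Fn lam z w / Dn z w)
         = 2 * of_real pi * \<i> * (- exp (- of_real lam * z) +
             cos (of_real pi * z) / of_real pi * (\<Sum>m<N. aa lam z (int m + 1) + aa lam z (- int m)))"
proof -
  define a1 where "a1 = Complex \<beta> (- real N)"
  define a3 where "a3 = Complex (\<beta> + real N) (real N)"
  define p :: "nat \<Rightarrow> complex" where "p = (\<lambda>m. of_real (real m + 1/2))"
  define pts where "pts = insert z (p ` {..<N})"
  define eps where "eps = (1/2 - \<beta>) / 2"
  define S where "S = box (Complex (\<beta>/2) (- real N - 1)) (Complex (\<beta> + real N + eps) (real N + 1))"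
  define f where "f = (\<lambda>w. Fn lam z w / Dn z w)"
  have eps: "eps > 0" "\<beta> + eps < 1/2" using assms(3) unfolding eps_def by (simp_all add: field_simps)
  have Rez: "Re z > 0" using assms by linarith
  have znz: "z \<noteq> 0" using Rez by auto
  have Rep: "Re (p m) = real m + 1/2" "Im (p m) = 0" for m by (simp_all add: p_def)
  have pts_box: "pts \<subseteq> box a1 a3"
  proof
    fix q assume "q \<in> pts"
    then consider "q = z" | m where "m < N" "q = p m" by (auto simp: pts_def)
    then show "q \<in> box a1 a3"
    proof cases
      case 1 then show ?thesis using assms by (auto simp: in_box_complex_iff a1_def a3_def)
    next
      case (2 m)
      then have "real m + 1 \<le> real N" by linarith
      then show ?thesis using 2 assms by (auto simp: in_box_complex_iff a1_def a3_def Rep)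
    qed
  qed
  have cbox_S: "cbox a1 a3 \<subseteq> S"
    using assms eps by (auto simp: S_def a1_def a3_def in_box_complex_iff in_cbox_complex_iff)
  have Dn_nz: "Dn z w \<noteq> 0" if "w \<in> S - pts" for w
  proof
    assume D0: "Dn z w = 0"
    have wS: "\<beta>/2 < Re w" "Re w < \<beta> + real N + eps" and wpts: "w \<notin> pts"
      using that by (auto simp: S_def in_box_complex_iff)
    from D0 consider "cos (of_real pi * w) = 0" | "z^2 = w^2" by (auto simp: Dn_def)
    then show False
    proof cases
      case 1
      then obtain n :: int where n: "w = of_int n + 1/2" using cos_pi_zero by blast
      then have Rew: "Re w = real_of_int n + 1/2" by simp
      have "n \<ge> 0" using wS Rew assms by linarith
      moreover have "n < int N" using wS Rew eps by linarith
      ultimately have "nat n < N" "w = p (nat n)" using n by (auto simp: p_def)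
      then have "w \<in> pts" by (auto simp: pts_def)
      then show False using wpts by simp
    next
      case 2
      have "(z - w) * (z + w) = 0" using 2 by (simp add: algebra_simps power2_eq_square)
      then have "z - w = 0 \<or> z + w = 0" by simp
      then have "w = z \<or> w = - z" by (metis add.commute add_eq_0_iff right_minus_eq)
      then show False
      proof
        assume "w = z" then show False using wpts by (simp add: pts_def)
      next
        assume "w = - z" then show False using wS Rez assms by simp
      qed
    qed
  qed
  have holo: "f holomorphic_on S - pts"
    unfolding f_def by (intro holomorphic_intros) (use Dn_nz in auto)
  have pi_le: "Re a1 \<le> Re a3" "Im a1 \<le> Im a3" using assms by (auto simp: a1_def a3_def)
  have img: "path_image (rectpath a1 a3) \<subseteq> S - pts"
    using path_image_rectpath_cbox_minus_box[OF pi_le] cbox_S pts_box by auto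
  have wout: "\<forall>w. w \<notin> S \<longrightarrow> winding_number (rectpath a1 a3) w = 0"
    using winding_number_rectpath_outside[OF pi_le] cbox_S by auto
  have fin: "finite pts" by (simp add: pts_def)
  have "contour_integral (rectpath a1 a3) f = 2 * pi * \<i> * (\<Sum>q\<in>pts. winding_number (rectpath a1 a3) q * residue f q)"
    by (rule Residue_theorem[OF _ _ fin holo _ _ img wout])
       (auto simp: S_def intro!: convex_connected)
  also have "(\<Sum>q\<in>pts. winding_number (rectpath a1 a3) q * residue f q) = (\<Sum>q\<in>pts. residue f q)"
    by (intro sum.cong refl) (use pts_box winding_number_rectpath in auto)
  also have "\<dots> = residue f z + (\<Sum>q\<in>p ` {..<N}. residue f q)"
  proof -
    have "z \<notin> p ` {..<N}" using assms cos_half_int by (auto simp: p_def)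
    then show ?thesis by (simp add: pts_def)
  qed
  also have "(\<Sum>q\<in>p ` {..<N}. residue f q) = (\<Sum>m<N. residue f (p m))"
    by (rule sum.reindex_cong[where l = p]) (auto simp: inj_on_def p_def)
  also have "\<dots> = (\<Sum>m<N. cos (of_real pi * z) / of_real pi * (aa lam z (int m + 1) + aa lam z (- int m)))"
    by (intro sum.cong refl) (use res_half[OF assms(5) Rez assms(1)] in \<open>simp add: f_def p_def\<close>)
  also have "residue f z = - exp (- of_real lam * z)"
    unfolding f_def by (rule res_z[OF assms(5) znz])
  finally show ?thesis by (simp add: a1_def a3_def f_def sum_distrib_left)
qed



definition PP :: "real \<Rightarrow> real" where "PP t = (if t \<in> {0..} then exp (- pi * t) else 0)"
definition QQ :: "real \<Rightarrow> real" where "QQ t = (if t \<in> {..0} then exp (pi * t) else 0)"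

lemma PP_int: "PP integrable_on UNIV"
proof -
  have "(\<lambda>t. exp (- pi * t)) integrable_on {0..}"
    by (rule integrable_on_exp_minus_to_infinity) simp
  then show ?thesis unfolding PP_def integrable_restrict_UNIV .
qed

lemma QQ_int: "QQ integrable_on UNIV"
proof -
  have i: "(\<lambda>t. exp (- pi * t)) integrable_on {0..}"
    by (rule integrable_on_exp_minus_to_infinity) simp
  have "(\<lambda>t. exp (- pi * t)) absolutely_integrable_on {0..}"
    by (rule nonnegative_absolutely_integrable_1[OF i]) simp
  then have "(\<lambda>x. \<bar>-1\<bar> * exp (pi * (- x))) absolutely_integrable_on {0..}" by simp
  then have "(\<lambda>t. exp (pi * t)) absolutely_integrable_on uminus ` {0..}"
    by (subst absolutely_integrable_change_of_variables_1'[where h = "\<lambda>_. -1"])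
       (auto intro!: derivative_eq_intros)
  moreover have "uminus ` {0..} = {..(0::real)}"
    by (auto simp: image_iff intro!: exI[where x = "- x" for x])
  ultimately have "(\<lambda>t. exp (pi * t)) integrable_on {..0}"
    using absolutely_integrable_on_def by auto
  then show ?thesis unfolding QQ_def integrable_restrict_UNIV .
qed

lemma exp_abs_le: "exp (- pi * \<bar>t\<bar>) \<le> PP t + QQ t"
  by (cases "t \<ge> 0") (auto simp: PP_def QQ_def)

lemma left_bound:
  fixes lam \<beta> \<delta> t :: real and z :: complex
  assumes "lam \<ge> 0" "0 < \<beta>" "\<beta> < 1/2" "\<delta> > 0" "Re z - \<beta> \<ge> \<delta>"
  defines "w \<equiv> of_real \<beta> + \<i> * of_real t"
  shows "norm ((cos (of_real pi * z) / cos (of_real pi * w)) * (2 * w / (z^2 - w^2))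
              * exp (- of_real lam * w) * \<i>)
         \<le> norm (cos (of_real pi * z)) * (4 / (\<delta> * cos (pi * \<beta>))) * exp (- pi * \<bar>t\<bar>)"
proof -
  have Rew: "Re w = \<beta>" "Im w = t" by (simp_all add: w_def)
  have cb: "cos (pi * \<beta>) > 0"
  proof -
    have "0 < pi * \<beta>" using assms by simp
    moreover have "pi * \<beta> < pi * (1/2)" using assms by (intro mult_strict_left_mono) auto
    ultimately show ?thesis using pi_gt_zero by (intro cos_gt_zero_pi) linarith+
  qed
  have "norm (cos (of_real pi * w)) \<ge> \<bar>cos (pi * \<beta>)\<bar> * ((exp (pi * t) + exp (- (pi * t))) / 2)"
    using cos_lower_Re[of "of_real pi * w"] by (simp add: Rew)
  moreover have "(exp (pi * t) + exp (- (pi * t))) / 2 \<ge> exp (pi * \<bar>t\<bar>) / 2"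
    by (cases "t \<ge> 0") auto
  ultimately have c1: "norm (cos (of_real pi * w)) \<ge> cos (pi * \<beta>) * (exp (pi * \<bar>t\<bar>) / 2)"
    using cb by (smt (verit, best) mult_left_mono)
  have c2: "cos (pi * \<beta>) * (exp (pi * \<bar>t\<bar>) / 2) > 0" using cb by simp
  have d1: "norm (z - w) \<ge> \<delta>"
    using complex_Re_le_cmod[of "z - w"] assms Rew by simp
  have d2: "norm (z + w) \<ge> \<delta>"
    using complex_Re_le_cmod[of "z + w"] assms Rew by simp
  have zw: "z^2 \<noteq> w^2"
  proof
    assume "z^2 = w^2"
    then have "(z - w) * (z + w) = 0" by (simp add: algebra_simps power2_eq_square)
    then show False using d1 d2 assms by auto
  qed
  have b2: "norm (2 * w / (z^2 - w^2)) \<le> 2 / \<delta>"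
  proof -
    have "norm (2 * w / (z^2 - w^2)) \<le> 1 / norm (z - w) + 1 / norm (z + w)" by (rule bound_2w[OF zw])
    also have "\<dots> \<le> 1/\<delta> + 1/\<delta>" using d1 d2 assms by (intro add_mono frac_le) auto
    finally show ?thesis by simp
  qed
  have b3: "norm (exp (- of_real lam * w)) \<le> 1"
    using assms by (simp add: Rew)
  have "norm ((cos (of_real pi * z) / cos (of_real pi * w)) * (2 * w / (z^2 - w^2))
              * exp (- of_real lam * w) * \<i>)
      = norm (cos (of_real pi * z)) / norm (cos (of_real pi * w)) * norm (2 * w / (z^2 - w^2))
         * norm (exp (- of_real lam * w))"
    by (simp add: norm_mult norm_divide)
  also have "\<dots> \<le> norm (cos (of_real pi * z)) / (cos (pi * \<beta>) * (exp (pi * \<bar>t\<bar>) / 2)) * (2 / \<delta>) * 1"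
  proof -
    let ?A = "norm (cos (of_real pi * z))" and ?c = "norm (cos (of_real pi * w))"
      and ?L = "cos (pi * \<beta>) * (exp (pi * \<bar>t\<bar>) / 2)"
    have cpos: "?c > 0" using c1 c2 by linarith
    have h1: "?A / ?c \<le> ?A / ?L"
      by (rule divide_left_mono[OF c1]) (use c2 cpos in auto)
    have h2: "?A / ?c * norm (2 * w / (z^2 - w^2)) \<le> ?A / ?L * (2/\<delta>)"
      by (rule mult_mono[OF h1 b2]) (use c2 in auto)
    show ?thesis
      by (rule mult_mono[OF h2 b3]) (use c2 assms in auto)
  qed
  also have "\<dots> = norm (cos (of_real pi * z)) * (4 / (\<delta> * cos (pi * \<beta>))) * exp (- pi * \<bar>t\<bar>)"
    using cb assms by (simp add: field_simps exp_minus)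
  finally show ?thesis .
qed



lemma zw_nz:
  fixes z w :: complex
  assumes "norm (z - w) > 0" "norm (z + w) > 0"
  shows "z^2 \<noteq> w^2"
proof
  assume "z^2 = w^2"
  then have "(z - w) * (z + w) = 0" by (simp add: algebra_simps power2_eq_square)
  then show False using assms by auto
qed

lemma f_bound:
  fixes z w :: complex and lam c :: real
  assumes "c > 0" "norm (cos (of_real pi * w)) \<ge> c" "norm (z - w) \<ge> 1" "norm (z + w) \<ge> 1"
  shows "norm (Fn lam z w / Dn z w) \<le> norm (cos (of_real pi * z)) / c * 2 * exp (- lam * Re w)"
proof -
  have zw: "z^2 \<noteq> w^2" using assms by (intro zw_nz) auto
  have b2: "norm (2 * w / (z^2 - w^2)) \<le> 2"
  proof -
    have "norm (2 * w / (z^2 - w^2)) \<le> 1 / norm (z - w) + 1 / norm (z + w)" by (rule bound_2w[OF zw])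
    also have "\<dots> \<le> 1 + 1" using assms by (intro add_mono) (auto simp: divide_le_eq_1)
    finally show ?thesis by simp
  qed
  have "norm (Fn lam z w / Dn z w) = norm ((cos (of_real pi * z) / cos (of_real pi * w)) * (2 * w / (z^2 - w^2)) * exp (- of_real lam * w))"
    by (simp only: integrand_eq)
  also have "\<dots> = norm (cos (of_real pi * z)) / norm (cos (of_real pi * w)) * norm (2 * w / (z^2 - w^2))
         * exp (- lam * Re w)"
    by (simp add: norm_mult norm_divide)
  also have "\<dots> \<le> norm (cos (of_real pi * z)) / c * 2 * exp (- lam * Re w)"
  proof -
    let ?A = "norm (cos (of_real pi * z))" and ?c = "norm (cos (of_real pi * w))"
    have cpos: "?c > 0" using assms by linarith
    have h1: "?A / ?c \<le> ?A / c"
      by (rule divide_left_mono[OF assms(2)]) (use assms cpos in auto)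
    have h2: "?A / ?c * norm (2 * w / (z^2 - w^2)) \<le> ?A / c * 2"
      by (rule mult_mono[OF h1 b2]) (use assms in auto)
    show ?thesis
      by (rule mult_right_mono[OF h2]) simp
  qed
  finally show ?thesis .
qed

lemma horiz_bound:
  fixes z w :: complex and lam N :: real
  assumes "N > 0" "\<bar>Im w\<bar> = N" "N \<ge> \<bar>Im z\<bar> + 1" "Re w \<ge> 0" "lam \<ge> 0"
  shows "norm (Fn lam z w / Dn z w) \<le> norm (cos (of_real pi * z)) / ((exp (pi * N) - exp (- pi * N)) / 2) * 2"
proof -
  have c: "(exp (pi * N) - exp (- pi * N)) / 2 > 0" using assms by simp
  have "norm (cos (of_real pi * w)) \<ge> \<bar>exp (Im (of_real pi * w)) - exp (- Im (of_real pi * w))\<bar> / 2"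
    by (rule cos_lower_Im)
  moreover have "\<bar>exp (Im (of_real pi * w)) - exp (- Im (of_real pi * w))\<bar> = exp (pi * N) - exp (- pi * N)"
  proof (cases "Im w \<ge> 0")
    case True then have "Im w = N" using assms by simp
    then show ?thesis using c by simp
  next
    case False then have "Im w = - N" using assms by simp
    then show ?thesis using c by simp
  qed
  ultimately have cl: "norm (cos (of_real pi * w)) \<ge> (exp (pi * N) - exp (- pi * N)) / 2" by simp
  have d1: "norm (z - w) \<ge> 1"
    using abs_Im_le_cmod[of "z - w"] assms by simp
  have d2: "norm (z + w) \<ge> 1"
    using abs_Im_le_cmod[of "z + w"] assms by simp
  have "norm (Fn lam z w / Dn z w) \<le> norm (cos (of_real pi * z)) / ((exp (pi * N) - exp (- pi * N)) / 2) * 2 * exp (- lam * Re w)"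
    by (rule f_bound[OF c cl d1 d2])
  also have "\<dots> \<le> norm (cos (of_real pi * z)) / ((exp (pi * N) - exp (- pi * N)) / 2) * 2 * 1"
    using assms c by (intro mult_left_mono) auto
  finally show ?thesis by simp
qed

lemma right_bound:
  fixes z w :: complex and lam \<beta> :: real and N :: nat
  assumes "0 < \<beta>" "\<beta> < 1/2" "Re w = \<beta> + real N" "Re w \<ge> Re z + 1" "Re z \<ge> 0"
  shows "norm (Fn lam z w / Dn z w) \<le> norm (cos (of_real pi * z)) / cos (pi * \<beta>) * 2 * exp (- lam * (\<beta> + real N))"
proof -
  have cb: "cos (pi * \<beta>) > 0"
  proof -
    have "0 < pi * \<beta>" using assms by simp
    moreover have "pi * \<beta> < pi * (1/2)" using assms by (intro mult_strict_left_mono) auto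
    ultimately show ?thesis using pi_gt_zero by (intro cos_gt_zero_pi) linarith+
  qed
  have "norm (cos (of_real pi * w)) \<ge> \<bar>cos (Re (of_real pi * w))\<bar> * ((exp (Im (of_real pi * w)) + exp (- Im (of_real pi * w))) / 2)"
    by (rule cos_lower_Re)
  moreover have "(exp (Im (of_real pi * w)) + exp (- Im (of_real pi * w))) / 2 \<ge> 1"
    using cosh_real_ge_1[of "Im (of_real pi * w)"] by (simp add: cosh_def)
  moreover have "\<bar>cos (Re (of_real pi * w))\<bar> = cos (pi * \<beta>)"
  proof -
    have "cos (Re (of_real pi * w)) = cos (pi * \<beta> + real N * pi)" using assms by (simp add: algebra_simps)
    also have "\<dots> = cos (pi * \<beta>) * (-1)^N" by (simp add: cos_add)
    finally show ?thesis using cb by (simp add: abs_mult power_abs)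
  qed
  ultimately have cl: "norm (cos (of_real pi * w)) \<ge> cos (pi * \<beta>)"
    using cb by (smt (verit) mult_left_mono mult_cancel_left1)
  have d1: "norm (z - w) \<ge> 1"
    using abs_Re_le_cmod[of "z - w"] assms by simp
  have d2: "norm (z + w) \<ge> 1"
    using abs_Re_le_cmod[of "z + w"] assms by simp
  show ?thesis using f_bound[OF cb cl d1 d2] assms by simp
qed



lemma half_int_ne:
  fixes \<beta> :: real and n :: int and N :: nat
  assumes "0 < \<beta>" "\<beta> < 1/2"
  shows "real_of_int n + 1/2 \<noteq> \<beta> + real N"
proof
  assume h: "real_of_int n + 1/2 = \<beta> + real N"
  then have "real_of_int (n - int N) = \<beta> - 1/2" by simp
  then have "real_of_int (n - int N) > -1" "real_of_int (n - int N) < 0" using assms by linarith+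
  then have "n - int N > -1" "n - int N < 0" by linarith+
  then show False by linarith
qed

lemma Dn_nz_path:
  fixes N :: nat and lam \<beta> :: real and z w :: complex
  assumes "0 < \<beta>" "\<beta> < 1/2" "Re z > \<beta>"
    and "real N > Re z - \<beta>" "real N > \<bar>Im z\<bar>"
    and w: "w \<in> path_image (rectpath (Complex \<beta> (- real N)) (Complex (\<beta> + real N) (real N)))"
  shows "Dn z w \<noteq> 0"
proof
  assume D0: "Dn z w = 0"
  have Npos: "real N > 0" using assms by linarith
  have le: "Re (Complex \<beta> (- real N)) \<le> Re (Complex (\<beta> + real N) (real N))"
           "Im (Complex \<beta> (- real N)) \<le> Im (Complex (\<beta> + real N) (real N))" using Npos by simp_all
  have wc: "(Re w = \<beta> \<or> Re w = \<beta> + real N) \<and> Im w \<in> {- real N..real N} \<or>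
            (Im w = - real N \<or> Im w = real N) \<and> Re w \<in> {\<beta>..\<beta> + real N}"
    using w unfolding path_image_rectpath[OF le] by auto
  from D0 consider "cos (of_real pi * w) = 0" | "z^2 = w^2" by (auto simp: Dn_def)
  then show False
  proof cases
    case 1
    then obtain n :: int where n: "w = of_int n + 1/2" using cos_pi_zero by blast
    then have "Re w = real_of_int n + 1/2" "Im w = 0" by simp_all
    then show False using wc Npos half_int_ne[OF assms(1,2), of n N] half_int_ne[OF assms(1,2), of n 0]
      by auto
  next
    case 2
    have "(z - w) * (z + w) = 0" using 2 by (simp add: algebra_simps power2_eq_square)
    then have "z - w = 0 \<or> z + w = 0" by simp
    then have "w = z \<or> w = - z" by (metis add.commute add_eq_0_iff right_minus_eq)
    then show False
    proof
      assume "w = z" then show False using wc assms by auto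
    next
      assume "w = - z" then show False using wc assms Npos by auto
    qed
  qed
qed

lemma rect_split:
  fixes f :: "complex \<Rightarrow> complex"
  assumes "continuous_on (path_image (rectpath a1 a3)) f"
  defines "a2 \<equiv> Complex (Re a3) (Im a1)" and "a4 \<equiv> Complex (Re a1) (Im a3)"
  shows "contour_integral (rectpath a1 a3) f = contour_integral (linepath a1 a2) f
           + contour_integral (linepath a2 a3) f + contour_integral (linepath a3 a4) f
           + contour_integral (linepath a4 a1) f"
proof -
  have pim: "path_image (rectpath a1 a3) = closed_segment a1 a2 \<union> closed_segment a2 a3 \<union> closed_segment a3 a4 \<union> closed_segment a4 a1"
    by (simp add: rectpath_def Let_def path_image_join a2_def a4_def Un_assoc)
  have ci: "(f has_contour_integral contour_integral (linepath a b) f) (linepath a b)"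
    if "closed_segment a b \<subseteq> path_image (rectpath a1 a3)" for a b
    by (rule has_contour_integral_integral, rule contour_integrable_continuous_linepath,
        rule continuous_on_subset[OF assms(1) that])
  have "(f has_contour_integral (contour_integral (linepath a1 a2) f + (contour_integral (linepath a2 a3) f
           + (contour_integral (linepath a3 a4) f + contour_integral (linepath a4 a1) f))))
         (linepath a1 a2 +++ (linepath a2 a3 +++ (linepath a3 a4 +++ linepath a4 a1)))"
    by (intro has_contour_integral_join ci valid_path_join valid_path_linepath) (auto simp: pim)
  then have "contour_integral (rectpath a1 a3) f = contour_integral (linepath a1 a2) f + (contour_integral (linepath a2 a3) f
           + (contour_integral (linepath a3 a4) f + contour_integral (linepath a4 a1) f))"
    by (simp add: rectpath_def Let_def a2_def a4_def contour_integral_unique)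
  then show ?thesis by (simp add: add_ac)
qed

lemma lim1: "((\<lambda>N::nat. c * (real N / (exp (pi * real N) - exp (- pi * real N)))) \<longlonglongrightarrow> 0)"
proof -
  have "((\<lambda>x::real. x / (exp (pi * x) - exp (- pi * x))) \<longlongrightarrow> 0) at_top" by real_asymp
  then have "((\<lambda>N::nat. real N / (exp (pi * real N) - exp (- pi * real N))) \<longlonglongrightarrow> 0)"
    using filterlim_compose filterlim_real_sequentially by blast
  then show ?thesis using tendsto_mult_right_zero by blast
qed

lemma lim2:
  assumes "lam > 0"
  shows "((\<lambda>N::nat. c * (real N * exp (- lam * real N))) \<longlonglongrightarrow> 0)"
proof -
  have "((\<lambda>x::real. x * exp (- lam * x)) \<longlongrightarrow> 0) at_top" using assms by real_asymp
  then have "((\<lambda>N::nat. real N * exp (- lam * real N)) \<longlonglongrightarrow> 0)"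
    using filterlim_compose filterlim_real_sequentially by blast
  then show ?thesis using tendsto_mult_right_zero by blast
qed



lemma main_nz:
  fixes lam \<beta> :: real and z :: complex
  assumes lam: "lam > 0" and b0: "0 < \<beta>" and b1: "\<beta> < 1/2" and zb: "Re z > \<beta>"
    and Cnz: "cos (of_real pi * z) \<noteq> 0"
  defines "g \<equiv> (\<lambda>t::real. (cos (of_real pi * z) / cos (of_real pi * (of_real \<beta> + \<i> * of_real t)))
              * (2 * (of_real \<beta> + \<i> * of_real t) / (z^2 - (of_real \<beta> + \<i> * of_real t)^2))
              * exp (- of_real lam * (of_real \<beta> + \<i> * of_real t)) * \<i>)"
  shows "(g has_integral (2 * of_real pi * \<i> * (exp (- of_real lam * z) - K_raw lam z))) UNIV"
proof -
  define C where "C = cos (of_real pi * z)"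
  define f where "f = (\<lambda>w. Fn lam z w / Dn z w)"
  define \<delta> where "\<delta> = Re z - \<beta>"
  define M where "M = norm C * (4 / (\<delta> * cos (pi * \<beta>)))"
  have dpos: "\<delta> > 0" using zb by (simp add: \<delta>_def)
  have cb: "cos (pi * \<beta>) > 0"
  proof -
    have "0 < pi * \<beta>" using b0 by simp
    moreover have "pi * \<beta> < pi * (1/2)" using b1 by (intro mult_strict_left_mono) auto
    ultimately show ?thesis using pi_gt_zero by (intro cos_gt_zero_pi) linarith+
  qed
  have Mpos: "M \<ge> 0" using dpos cb by (simp add: M_def)
  have g_eq: "g t = f (Complex \<beta> t) * \<i>" for t
    by (simp only: g_def f_def integrand_eq Complex_eq)
  have gbound: "norm (g t) \<le> M * exp (- pi * \<bar>t\<bar>)" for t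
    unfolding g_def M_def C_def
    by (rule left_bound[of lam \<beta> \<delta> z t]) (use lam b0 b1 dpos in \<open>auto simp: \<delta>_def\<close>)
  have wnz: "cos (of_real pi * (of_real \<beta> + \<i> * of_real t)) \<noteq> 0 \<and> z^2 - (of_real \<beta> + \<i> * of_real t)^2 \<noteq> 0" for t
  proof -
    define w where "w = of_real \<beta> + \<i> * of_real t"
    have Rew: "Re w = \<beta>" by (simp add: w_def)
    have c1: "cos (of_real pi * w) \<noteq> 0"
    proof
      assume "cos (of_real pi * w) = 0"
      then obtain n :: int where "w = of_int n + 1/2" using cos_pi_zero by blast
      then have "real_of_int n + 1/2 = \<beta> + real 0" using Rew by simp
      then show False using half_int_ne[OF b0 b1] by blast
    qed
    have c2: "z^2 - w^2 \<noteq> 0"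
    proof
      assume "z^2 - w^2 = 0"
      then have "(z - w) * (z + w) = 0" by (simp add: algebra_simps power2_eq_square)
      then have "z - w = 0 \<or> z + w = 0" by simp
      then have "Re z = Re w \<or> Re z = - Re w" by (auto simp: complex_eq_iff)
      then show False using Rew zb b0 by auto
    qed
    show ?thesis using c1 c2 by (simp add: w_def)
  qed
  have gcont: "continuous_on UNIV g"
    unfolding g_def by (intro continuous_intros) (use wnz in auto)
  have gint: "g integrable_on {a..b}" for a b
    by (rule integrable_continuous_interval, rule continuous_on_subset[OF gcont]) auto
  define fk where "fk = (\<lambda>k::nat. \<lambda>t. if t \<in> {- real k..real k} then g t else 0)"
  define h where "h = (\<lambda>t. M * (PP t + QQ t))"
  have hint: "h integrable_on UNIV"
    unfolding h_def by (intro integrable_on_mult_right integrable_add PP_int QQ_int)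
  have fkint: "fk k integrable_on UNIV" for k
    unfolding fk_def integrable_restrict_UNIV by (rule gint)
  have PQ0: "PP t \<ge> 0" "QQ t \<ge> 0" for t by (auto simp: PP_def QQ_def)
  have fkle: "norm (fk k t) \<le> h t" for k t
  proof (cases "t \<in> {- real k..real k}")
    case True
    have "norm (g t) \<le> M * exp (- pi * \<bar>t\<bar>)" by (rule gbound)
    also have "\<dots> \<le> h t" unfolding h_def by (intro mult_left_mono exp_abs_le Mpos)
    finally show ?thesis using True by (simp add: fk_def)
  next
    case False then have "fk k t = 0" unfolding fk_def by auto
    then show ?thesis using Mpos PQ0[of t] by (simp add: h_def)
  qed
  have fkconv: "(\<lambda>k. fk k t) \<longlonglongrightarrow> g t" for t
  proof (rule tendsto_eventually)
    show "\<forall>\<^sub>F k in sequentially. fk k t = g t"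
      unfolding eventually_sequentially
    proof (intro exI allI impI)
      fix k assume "k \<ge> nat \<lceil>\<bar>t\<bar>\<rceil>"
      then have "real k \<ge> \<bar>t\<bar>" by linarith
      then have "t \<in> {- real k..real k}" by (auto simp: abs_le_iff)
      then show "fk k t = g t" by (simp add: fk_def)
    qed
  qed
  have DC: "g integrable_on UNIV" "(\<lambda>k. integral UNIV (fk k)) \<longlonglongrightarrow> integral UNIV g"
  proof -
    have fkle': "\<And>k t. t \<in> UNIV \<Longrightarrow> norm (fk k t) \<le> h t" using fkle by blast
    have fkconv': "\<And>t. t \<in> UNIV \<Longrightarrow> (\<lambda>k. fk k t) \<longlonglongrightarrow> g t" using fkconv by blast
    show "g integrable_on UNIV" "(\<lambda>k. integral UNIV (fk k)) \<longlonglongrightarrow> integral UNIV g"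
      using dominated_convergence[OF fkint hint fkle' fkconv'] by blast+
  qed
  have fk_int: "integral UNIV (fk k) = integral {- real k..real k} g" for k
    unfolding fk_def by (rule integral_restrict_UNIV)
  have lim_G: "(\<lambda>k. integral {- real k..real k} g) \<longlonglongrightarrow> integral UNIV g"
    using DC(2) by (simp add: fk_int)
  define S where "S = (\<lambda>N. \<Sum>m<N. aa lam z (int m + 1) + aa lam z (- int m))"
  define Ib where "Ib = (\<lambda>N::nat. contour_integral (linepath (Complex \<beta> (- real N)) (Complex (\<beta> + real N) (- real N))) f)"
  define Ir where "Ir = (\<lambda>N::nat. contour_integral (linepath (Complex (\<beta> + real N) (- real N)) (Complex (\<beta> + real N) (real N))) f)"
  define It where "It = (\<lambda>N::nat. contour_integral (linepath (Complex (\<beta> + real N) (real N)) (Complex \<beta> (real N))) f)"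
  define N0 where "N0 = nat \<lceil>norm z + 2\<rceil>"
  have Rez: "Re z > 0" using zb b0 by linarith
  have big: "real N > Re z - \<beta> + 1" "real N \<ge> \<bar>Im z\<bar> + 1" "real N > 0" if "N \<ge> N0" for N
  proof -
    have "real N \<ge> norm z + 2" using that unfolding N0_def by linarith
    moreover have "\<bar>Re z\<bar> \<le> norm z" "\<bar>Im z\<bar> \<le> norm z" by (rule abs_Re_le_cmod, rule abs_Im_le_cmod)
    ultimately show "real N > Re z - \<beta> + 1" "real N \<ge> \<bar>Im z\<bar> + 1" "real N > 0"
      using b0 by linarith+
  qed
  have ident: "integral {- real N..real N} g = Ib N + Ir N + It N + 2 * of_real pi * \<i> * exp (- of_real lam * z)
                 - 2 * of_real pi * \<i> * (C / of_real pi * S N)" if N: "N \<ge> N0" for N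
  proof -
    note bN = big[OF N]
    define a1 where "a1 = Complex \<beta> (- real N)"
    define a3 where "a3 = Complex (\<beta> + real N) (real N)"
    have cont: "continuous_on (path_image (rectpath a1 a3)) f"
    proof -
      have "f holomorphic_on {w. Dn z w \<noteq> 0}" unfolding f_def by (intro holomorphic_intros) auto
      then have "continuous_on {w. Dn z w \<noteq> 0} f" by (rule holomorphic_on_imp_continuous_on)
      moreover have "path_image (rectpath a1 a3) \<subseteq> {w. Dn z w \<noteq> 0}"
        using Dn_nz_path[OF b0 b1 zb, of N] bN by (auto simp: a1_def a3_def)
      ultimately show ?thesis by (rule continuous_on_subset)
    qed
    have split: "contour_integral (rectpath a1 a3) f = Ib N + Ir N + It N
        + contour_integral (linepath (Complex \<beta> (real N)) (Complex \<beta> (- real N))) f"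
      using rect_split[OF cont] by (simp add: a1_def a3_def Ib_def Ir_def It_def)
    have seg: "closed_segment (Complex \<beta> (real N)) (Complex \<beta> (- real N)) \<subseteq> path_image (rectpath a1 a3)"
      by (auto simp: rectpath_def Let_def path_image_join a1_def a3_def)
    have rev: "contour_integral (linepath (Complex \<beta> (real N)) (Complex \<beta> (- real N))) f
             = - contour_integral (linepath (Complex \<beta> (- real N)) (Complex \<beta> (real N))) f"
      by (rule contour_integral_reverse_linepath[OF continuous_on_subset[OF cont]])
         (use seg in simp)
    have lin: "contour_integral (linepath (Complex \<beta> (- real N)) (Complex \<beta> (real N))) f
             = \<i> * integral {- real N..real N} (\<lambda>x. f (Complex \<beta> x))"
      by (rule contour_integral_linepath_same_Re) (use bN in auto)
    have gI: "integral {- real N..real N} g = integral {- real N..real N} (\<lambda>x. f (Complex \<beta> x)) * \<i>"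
    proof -
      have "g = (\<lambda>t. f (Complex \<beta> t) * \<i>)" by (rule ext) (rule g_eq)
      then show ?thesis by simp
    qed
    have res: "contour_integral (rectpath a1 a3) f = 2 * of_real pi * \<i> * (- exp (- of_real lam * z) + C / of_real pi * S N)"
      unfolding a1_def a3_def f_def S_def C_def
      by (rule rect_residue[OF lam b0 b1 zb Cnz]) (use bN in auto)
    show ?thesis using split rev lin gI res by (simp add: algebra_simps)
  qed
  define Bh where "Bh = (\<lambda>N::nat. norm C / ((exp (pi * real N) - exp (- pi * real N)) / 2) * 2)"
  define Br where "Br = (\<lambda>N::nat. norm C / cos (pi * \<beta>) * 2 * exp (- lam * (\<beta> + real N)))"
  have fcont_seg: "f contour_integrable_on linepath a b"
    if "closed_segment a b \<subseteq> {w. Dn z w \<noteq> 0}" for a b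
  proof -
    have "f holomorphic_on {w. Dn z w \<noteq> 0}" unfolding f_def by (intro holomorphic_intros) auto
    then have "continuous_on {w. Dn z w \<noteq> 0} f" by (rule holomorphic_on_imp_continuous_on)
    then show ?thesis by (intro contour_integrable_continuous_linepath continuous_on_subset[OF _ that])
  qed
  have pimg: "path_image (rectpath (Complex \<beta> (- real N)) (Complex (\<beta> + real N) (real N))) \<subseteq> {w. Dn z w \<noteq> 0}"
    if "N \<ge> N0" for N
    using Dn_nz_path[OF b0 b1 zb, of N] big[OF that] by auto
  have Ib_le: "norm (Ib N) \<le> Bh N * real N" if N: "N \<ge> N0" for N
  proof -
    note bN = big[OF N]
    have seg: "closed_segment (Complex \<beta> (- real N)) (Complex (\<beta> + real N) (- real N)) \<subseteq> {w. Dn z w \<noteq> 0}"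
      using pimg[OF N] by (simp add: rectpath_def Let_def path_image_join)
    have "norm (Ib N) \<le> Bh N * norm (Complex (\<beta> + real N) (- real N) - Complex \<beta> (- real N))"
      unfolding Ib_def
    proof (rule contour_integral_bound_linepath[OF fcont_seg[OF seg]])
      show "0 \<le> Bh N" using bN by (simp add: Bh_def)
      fix w assume w: "w \<in> closed_segment (Complex \<beta> (- real N)) (Complex (\<beta> + real N) (- real N))"
      then have "Im w = - real N" "Re w \<ge> \<beta>"
        using bN by (auto simp: closed_segment_same_Im closed_segment_eq_real_ivl)
      then show "norm (f w) \<le> Bh N" unfolding f_def Bh_def C_def
        by (intro horiz_bound) (use bN b0 lam in auto)
    qed
    also have "norm (Complex (\<beta> + real N) (- real N) - Complex \<beta> (- real N)) = real N"
      by (simp add: cmod_def)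
    finally show ?thesis .
  qed
  have It_le: "norm (It N) \<le> Bh N * real N" if N: "N \<ge> N0" for N
  proof -
    note bN = big[OF N]
    have seg: "closed_segment (Complex (\<beta> + real N) (real N)) (Complex \<beta> (real N)) \<subseteq> {w. Dn z w \<noteq> 0}"
      using pimg[OF N] by (simp add: rectpath_def Let_def path_image_join)
    have "norm (It N) \<le> Bh N * norm (Complex \<beta> (real N) - Complex (\<beta> + real N) (real N))"
      unfolding It_def
    proof (rule contour_integral_bound_linepath[OF fcont_seg[OF seg]])
      show "0 \<le> Bh N" using bN by (simp add: Bh_def)
      fix w assume w: "w \<in> closed_segment (Complex (\<beta> + real N) (real N)) (Complex \<beta> (real N))"
      then have "Im w = real N" "Re w \<ge> \<beta>"
        using bN by (auto simp: closed_segment_same_Im closed_segment_eq_real_ivl)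
      then show "norm (f w) \<le> Bh N" unfolding f_def Bh_def C_def
        by (intro horiz_bound) (use bN b0 lam in auto)
    qed
    also have "norm (Complex \<beta> (real N) - Complex (\<beta> + real N) (real N)) = real N"
      by (simp add: cmod_def)
    finally show ?thesis .
  qed
  have Ir_le: "norm (Ir N) \<le> Br N * (2 * real N)" if N: "N \<ge> N0" for N
  proof -
    note bN = big[OF N]
    have seg: "closed_segment (Complex (\<beta> + real N) (- real N)) (Complex (\<beta> + real N) (real N)) \<subseteq> {w. Dn z w \<noteq> 0}"
      using pimg[OF N] by (simp add: rectpath_def Let_def path_image_join)
    have "norm (Ir N) \<le> Br N * norm (Complex (\<beta> + real N) (real N) - Complex (\<beta> + real N) (- real N))"
      unfolding Ir_def
    proof (rule contour_integral_bound_linepath[OF fcont_seg[OF seg]])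
      show "0 \<le> Br N" using cb by (simp add: Br_def)
      fix w assume w: "w \<in> closed_segment (Complex (\<beta> + real N) (- real N)) (Complex (\<beta> + real N) (real N))"
      then have "Re w = \<beta> + real N"
        by (auto simp: closed_segment_same_Re)
      then show "norm (f w) \<le> Br N" unfolding f_def Br_def C_def
        by (intro right_bound) (use bN b0 b1 Rez in auto)
    qed
    also have "norm (Complex (\<beta> + real N) (real N) - Complex (\<beta> + real N) (- real N)) = 2 * real N"
    proof -
      have "Complex (\<beta> + real N) (real N) - Complex (\<beta> + real N) (- real N) = \<i> * of_real (2 * real N)"
        by (simp add: complex_eq_iff)
      then show ?thesis by (simp add: norm_mult)
    qed
    finally show ?thesis .
  qed
  have limE: "(\<lambda>N. Ib N + Ir N + It N) \<longlonglongrightarrow> 0"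
  proof -
    have l1: "(\<lambda>N. Bh N * real N) \<longlonglongrightarrow> 0"
    proof -
      have "(\<lambda>N::nat. (4 * norm C) * (real N / (exp (pi * real N) - exp (- pi * real N)))) \<longlonglongrightarrow> 0"
        by (rule lim1)
      moreover have "Bh N * real N = (4 * norm C) * (real N / (exp (pi * real N) - exp (- pi * real N)))" for N
        by (simp add: Bh_def)
      ultimately show ?thesis by simp
    qed
    have l2: "(\<lambda>N. Br N * (2 * real N)) \<longlonglongrightarrow> 0"
    proof -
      have "(\<lambda>N::nat. (4 * norm C / cos (pi * \<beta>) * exp (- lam * \<beta>)) * (real N * exp (- lam * real N))) \<longlonglongrightarrow> 0"
        by (rule lim2[OF lam])
      moreover have "Br N * (2 * real N) = (4 * norm C / cos (pi * \<beta>) * exp (- lam * \<beta>)) * (real N * exp (- lam * real N))" for N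
        by (simp add: Br_def algebra_simps exp_add[symmetric])
      ultimately show ?thesis by simp
    qed
    have ev: "\<forall>\<^sub>F N in sequentially. norm (Ib N + Ir N + It N) \<le> Bh N * real N + Br N * (2 * real N) + Bh N * real N"
      unfolding eventually_sequentially
    proof (intro exI allI impI)
      fix N assume N: "N \<ge> N0"
      have "norm (Ib N + Ir N + It N) \<le> norm (Ib N) + norm (Ir N) + norm (It N)"
        by (meson norm_triangle_ineq add_mono order_trans order_refl)
      also have "\<dots> \<le> Bh N * real N + Br N * (2 * real N) + Bh N * real N"
        using Ib_le[OF N] Ir_le[OF N] It_le[OF N] by linarith
      finally show "norm (Ib N + Ir N + It N) \<le> Bh N * real N + Br N * (2 * real N) + Bh N * real N" .
    qed
    have "(\<lambda>N. Bh N * real N + Br N * (2 * real N) + Bh N * real N) \<longlonglongrightarrow> 0 + 0 + 0"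
      by (intro tendsto_add l1 l2)
    then have "(\<lambda>N. Bh N * real N + Br N * (2 * real N) + Bh N * real N) \<longlonglongrightarrow> 0" by simp
    then show ?thesis by (rule Lim_null_comparison[OF ev])
  qed
  have limS: "S \<longlonglongrightarrow> infsum (aa lam z) UNIV"
    unfolding S_def by (rule aa_series[OF lam Rez])
  have Kr: "K_raw lam z = C / of_real pi * infsum (aa lam z) UNIV"
    unfolding K_raw_def C_def aa_def[abs_def] by (rule refl)
  have "(\<lambda>N. Ib N + Ir N + It N + 2 * of_real pi * \<i> * exp (- of_real lam * z)
                 - 2 * of_real pi * \<i> * (C / of_real pi * S N))
        \<longlonglongrightarrow> 0 + 2 * of_real pi * \<i> * exp (- of_real lam * z) - 2 * of_real pi * \<i> * (C / of_real pi * infsum (aa lam z) UNIV)"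
    by (intro tendsto_intros limE limS)
  moreover have "0 + 2 * of_real pi * \<i> * exp (- of_real lam * z) - 2 * of_real pi * \<i> * (C / of_real pi * infsum (aa lam z) UNIV)
      = 2 * of_real pi * \<i> * (exp (- of_real lam * z) - K_raw lam z)"
    by (simp add: Kr algebra_simps)
  ultimately have L: "(\<lambda>N. Ib N + Ir N + It N + 2 * of_real pi * \<i> * exp (- of_real lam * z)
                 - 2 * of_real pi * \<i> * (C / of_real pi * S N))
        \<longlonglongrightarrow> 2 * of_real pi * \<i> * (exp (- of_real lam * z) - K_raw lam z)" by simp
  have ev: "\<forall>\<^sub>F N in sequentially. Ib N + Ir N + It N + 2 * of_real pi * \<i> * exp (- of_real lam * z)
                 - 2 * of_real pi * \<i> * (C / of_real pi * S N) = integral {- real N..real N} g"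
    unfolding eventually_sequentially using ident by (intro exI[of _ N0] allI impI) (simp only:)
  have "(\<lambda>N. integral {- real N..real N} g) \<longlonglongrightarrow> 2 * of_real pi * \<i> * (exp (- of_real lam * z) - K_raw lam z)"
    by (rule Lim_transform_eventually[OF L ev])
  with lim_G have "integral UNIV g = 2 * of_real pi * \<i> * (exp (- of_real lam * z) - K_raw lam z)"
    by (rule LIMSEQ_unique)
  with DC(1) show ?thesis by (metis has_integral_integral)
qed



lemma K_raw_near:
  fixes lam \<beta> :: real and z \<zeta> :: complex
  assumes lam: "lam > 0" and b0: "0 < \<beta>" and b1: "\<beta> < 1/2" and zb: "Re \<zeta> - \<beta> \<ge> \<delta>" and dpos: "\<delta> > 0"
    and Cnz: "cos (of_real pi * \<zeta>) \<noteq> 0"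
  shows "norm (K_raw lam \<zeta> - exp (- of_real lam * \<zeta>)) \<le>
           norm (cos (of_real pi * \<zeta>)) * (4 / (\<delta> * cos (pi * \<beta>))) * integral UNIV (\<lambda>t. PP t + QQ t) / (2 * pi)"
proof -
  define g where "g \<equiv> (\<lambda>t::real. (cos (of_real pi * \<zeta>) / cos (of_real pi * (of_real \<beta> + \<i> * of_real t)))
              * (2 * (of_real \<beta> + \<i> * of_real t) / (\<zeta>^2 - (of_real \<beta> + \<i> * of_real t)^2))
              * exp (- of_real lam * (of_real \<beta> + \<i> * of_real t)) * \<i>)"
  define c where "c = norm (cos (of_real pi * \<zeta>)) * (4 / (\<delta> * cos (pi * \<beta>)))"
  have cb: "cos (pi * \<beta>) > 0"
  proof -
    have "0 < pi * \<beta>" using b0 by simp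
    moreover have "pi * \<beta> < pi * (1/2)" using b1 by (intro mult_strict_left_mono) auto
    ultimately show ?thesis using pi_gt_zero by (intro cos_gt_zero_pi) linarith+
  qed
  have c0: "c \<ge> 0" using cb dpos by (simp add: c_def)
  have zb': "Re \<zeta> > \<beta>" using zb dpos by linarith
  have hi: "(g has_integral (2 * of_real pi * \<i> * (exp (- of_real lam * \<zeta>) - K_raw lam \<zeta>))) UNIV"
    unfolding g_def by (rule main_nz[OF lam b0 b1 zb' Cnz])
  have PQi: "(\<lambda>t. c * (PP t + QQ t)) integrable_on UNIV"
    by (intro integrable_on_mult_right integrable_add PP_int QQ_int)
  have bnd: "norm (g t) \<le> c * (PP t + QQ t)" for t
  proof -
    have "norm (g t) \<le> c * exp (- pi * \<bar>t\<bar>)"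
      unfolding g_def c_def by (rule left_bound) (use lam b0 b1 dpos zb in auto)
    also have "\<dots> \<le> c * (PP t + QQ t)" by (intro mult_left_mono exp_abs_le c0)
    finally show ?thesis .
  qed
  have "norm (integral UNIV g) \<le> integral UNIV (\<lambda>t. c * (PP t + QQ t))"
    by (rule integral_norm_bound_integral[OF _ PQi]) (use hi bnd in auto)
  also have "\<dots> = c * integral UNIV (\<lambda>t. PP t + QQ t)" by simp
  finally have "norm (2 * of_real pi * \<i> * (exp (- of_real lam * \<zeta>) - K_raw lam \<zeta>)) \<le> c * integral UNIV (\<lambda>t. PP t + QQ t)"
    using hi by (simp add: integral_unique)
  then have "2 * pi * norm (K_raw lam \<zeta> - exp (- of_real lam * \<zeta>)) \<le> c * integral UNIV (\<lambda>t. PP t + QQ t)"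
    by (simp add: norm_mult norm_minus_commute)
  then have H: "2 * pi * norm (K_raw lam \<zeta> - exp (- of_real lam * \<zeta>)) \<le> c * integral UNIV (\<lambda>t. PP t + QQ t)" .
  have "norm (K_raw lam \<zeta> - exp (- of_real lam * \<zeta>)) = (2 * pi * norm (K_raw lam \<zeta> - exp (- of_real lam * \<zeta>))) / (2 * pi)"
    by simp
  also have "\<dots> \<le> (c * integral UNIV (\<lambda>t. PP t + QQ t)) / (2 * pi)"
    by (rule divide_right_mono[OF H]) simp
  finally show ?thesis by (simp add: c_def)
qed

theorem lemma4p1:
  fixes lam \<beta> :: real and z :: complex
  assumes "lam > 0" and "0 < \<beta>" and "\<beta> < 1/2" and "Re z > \<beta>"
  shows "((\<lambda>t::real. (cos (of_real pi * z) / cos (of_real pi * (of_real \<beta> + \<i> * of_real t)))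
              * (2 * (of_real \<beta> + \<i> * of_real t) / (z^2 - (of_real \<beta> + \<i> * of_real t)^2))
              * exp (- of_real lam * (of_real \<beta> + \<i> * of_real t)) * \<i>)
          has_integral (2 * of_real pi * \<i> * (exp (- of_real lam * z) - K lam z))) UNIV"
proof (cases "cos (of_real pi * z) = 0")
  case False
  then have "K lam z = K_raw lam z" by (simp add: K_def)
  then show ?thesis using main_nz[OF assms False] by simp
next
  case True
  define \<delta> where "\<delta> = (Re z - \<beta>) / 2"
  have dpos: "\<delta> > 0" using assms by (simp add: \<delta>_def)
  define c2 where "c2 = (4 / (\<delta> * cos (pi * \<beta>))) * integral UNIV (\<lambda>t. PP t + QQ t) / (2 * pi)"
  obtain n :: int where zn: "z = of_int n + 1/2" using cos_pi_zero[OF True] by blast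
  have ev: "\<forall>\<^sub>F \<zeta> in at z. norm (K_raw lam \<zeta> - exp (- of_real lam * \<zeta>)) \<le> norm (cos (of_real pi * \<zeta>)) * c2"
    unfolding eventually_at
  proof (intro exI[of _ "min \<delta> (1/2)"] conjI ballI impI)
    show "min \<delta> (1/2) > 0" using dpos by simp
    fix \<zeta> assume "\<zeta> \<in> UNIV" and h: "\<zeta> \<noteq> z \<and> dist \<zeta> z < min \<delta> (1/2)"
    have "\<bar>Re \<zeta> - Re z\<bar> \<le> dist \<zeta> z"
      unfolding dist_norm using abs_Re_le_cmod[of "\<zeta> - z"] by simp
    moreover have "dist \<zeta> z < \<delta>" using h by simp
    ultimately have "Re z - Re \<zeta> < \<delta>" by (simp add: abs_le_iff)
    then have zb: "Re \<zeta> - \<beta> \<ge> \<delta>" using \<delta>_def by (simp add: field_simps)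
    have Cnz: "cos (of_real pi * \<zeta>) \<noteq> 0"
    proof
      assume "cos (of_real pi * \<zeta>) = 0"
      then obtain m :: int where zm: "\<zeta> = of_int m + 1/2" using cos_pi_zero by blast
      then have "\<zeta> - z = of_int (m - n)" using zn by simp
      moreover have "m \<noteq> n" using h zm zn by auto
      ultimately have "dist \<zeta> z \<ge> 1" unfolding dist_norm
        by (simp only: norm_of_int)
      then show False using h by simp
    qed
    show "norm (K_raw lam \<zeta> - exp (- of_real lam * \<zeta>)) \<le> norm (cos (of_real pi * \<zeta>)) * c2"
      unfolding c2_def using K_raw_near[OF assms(1,2,3) zb dpos Cnz] by (simp add: ac_simps)
  qed
  have "((\<lambda>\<zeta>. norm (cos (of_real pi * \<zeta>)) * c2) \<longlongrightarrow> norm (cos (of_real pi * z)) * c2) (at z)"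
    by (intro tendsto_intros)
  then have l0: "((\<lambda>\<zeta>. norm (cos (of_real pi * \<zeta>)) * c2) \<longlongrightarrow> 0) (at z)" using True by simp
  have l1: "((\<lambda>\<zeta>. K_raw lam \<zeta> - exp (- of_real lam * \<zeta>)) \<longlongrightarrow> 0) (at z)"
    by (rule Lim_null_comparison[OF ev l0])
  have l2: "((\<lambda>\<zeta>. exp (- of_real lam * \<zeta>)) \<longlongrightarrow> exp (- of_real lam * z)) (at z)"
    by (intro tendsto_intros)
  have "((\<lambda>\<zeta>. (K_raw lam \<zeta> - exp (- of_real lam * \<zeta>)) + exp (- of_real lam * \<zeta>)) \<longlongrightarrow> 0 + exp (- of_real lam * z)) (at z)"
    by (rule tendsto_add[OF l1 l2])
  then have "(K_raw lam \<longlongrightarrow> exp (- of_real lam * z)) (at z)" by simp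
  then have "Lim (at z) (K_raw lam) = exp (- of_real lam * z)"
    by (intro tendsto_Lim) simp
  then have K: "K lam z = exp (- of_real lam * z)" using True by (simp add: K_def)
  have "(\<lambda>t::real. (cos (of_real pi * z) / cos (of_real pi * (of_real \<beta> + \<i> * of_real t)))
              * (2 * (of_real \<beta> + \<i> * of_real t) / (z^2 - (of_real \<beta> + \<i> * of_real t)^2))
              * exp (- of_real lam * (of_real \<beta> + \<i> * of_real t)) * \<i>) = (\<lambda>t. 0)"
    using True by simp
  then show ?thesis using K by simp
qed

end
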